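(* Let $v_0\in\mathbb{R}^n$ be a unit vector, $\tau>0$, $\epsilon\ge 0$, and let $\mathbf{A}$ be any $n\times n\times n$ tensor with slices $A_i\in\mathbb{R}^{n\times n}$, $(A_i)_{jk}=\mathbf{A}_{ijk}$. Let $\mathbf{T}=\tau v_0^{\otimes 3}+\mathbf{A}$ with slices $T_i$. Let $w\in\mathbb{R}^{n^2}$ be the vector flattening of $\mathrm{Id}_{n\times n}$ (so $w_{(j,k)}=\delta_{jk}$). Suppose $\|\sum_i A_i\otimes A_i-n\,ww^T\|\le \epsilon\tau^2$ and $\|\sum_i v_0(i)A_i\|\le \epsilon\tau$. Then any top left or right singular vector $v'$ of $M:=\sum_i T_i\otimes T_i-n\,ww^T$ satisfies $\langle v',v_0\otimes v_0\rangle^2\ge 1-O(\epsilon)$.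
   Context: Norms of matrices are operator norms. The Kronecker product $A\otimes B$ is indexed by pairs: $(A\otimes B)[(j,k),(j',k')]=A_{jj'}B_{kk'}$. Note $n\,ww^T=\mathbb{E}\sum_i A_i\otimes A_i$ when $\mathbf{A}$ has i.i.d. standard Gaussian entries. *)

theory Defs
  imports Complex_Main
begin

text \<open>Matrices over a finite index set I are functions I => I => real (entries outside I
are irrelevant); vectors are functions I => real.\<close>

definition mvec :: "'i set \<Rightarrow> ('i \<Rightarrow> 'i \<Rightarrow> real) \<Rightarrow> ('i \<Rightarrow> real) \<Rightarrow> 'i \<Rightarrow> real" where
  "mvec I M x = (\<lambda>i. \<Sum>j\<in>I. M i j * x j)"

definition mtr :: "('i \<Rightarrow> 'i \<Rightarrow> real) \<Rightarrow> 'i \<Rightarrow> 'i \<Rightarrow> real" where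
  "mtr M = (\<lambda>i j. M j i)"

definition unitv :: "'i set \<Rightarrow> ('i \<Rightarrow> real) \<Rightarrow> bool" where
  "unitv I x \<longleftrightarrow> (\<Sum>i\<in>I. (x i)^2) = 1"

definition opnorm :: "'i set \<Rightarrow> ('i \<Rightarrow> 'i \<Rightarrow> real) \<Rightarrow> real" where
  "opnorm I M = Sup ((\<lambda>x. sqrt (\<Sum>i\<in>I. (mvec I M x i)^2)) ` {x. unitv I x})"

definition top_right_sv :: "'i set \<Rightarrow> ('i \<Rightarrow> 'i \<Rightarrow> real) \<Rightarrow> ('i \<Rightarrow> real) \<Rightarrow> bool" where
  "top_right_sv I M v \<longleftrightarrow> unitv I v \<and>
     (\<forall>i\<in>I. mvec I (mtr M) (mvec I M v) i = (opnorm I M)^2 * v i)"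

definition top_left_sv :: "'i set \<Rightarrow> ('i \<Rightarrow> 'i \<Rightarrow> real) \<Rightarrow> ('i \<Rightarrow> real) \<Rightarrow> bool" where
  "top_left_sv I M u \<longleftrightarrow> unitv I u \<and>
     (\<forall>i\<in>I. mvec I M (mvec I (mtr M) u) i = (opnorm I M)^2 * u i)"

text \<open>sum_{i<n} X_i (x) X_i for a tensor X with slices (X_i)_{jk} = X i j k; Kronecker product
  indexed by pairs: (P (x) Q)[(j,k),(j',k')] = P_{jj'} Q_{kk'}.\<close>
definition slice_kron_sum :: "nat \<Rightarrow> (nat \<Rightarrow> nat \<Rightarrow> nat \<Rightarrow> real) \<Rightarrow> nat \<times> nat \<Rightarrow> nat \<times> nat \<Rightarrow> real" where
  "slice_kron_sum n X p q = (\<Sum>i<n. X i (fst p) (fst q) * X i (snd p) (snd q))"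

definition flat_id :: "nat \<times> nat \<Rightarrow> real" where
  "flat_id p = (if fst p = snd p then 1 else 0)"

definition nwwT :: "nat \<Rightarrow> nat \<times> nat \<Rightarrow> nat \<times> nat \<Rightarrow> real" where
  "nwwT n p q = real n * flat_id p * flat_id q"

end

theory Submission imports Defs "HOL-Analysis.L2_Norm" begin

lemma L2_sq: "(L2_set f A)^2 = (\<Sum>i\<in>A. (f i)^2)"
  unfolding L2_set_def by (simp add: sum_nonneg)

lemma L2_le_iff: "L2_set f A \<le> L2_set g B \<longleftrightarrow> (\<Sum>i\<in>A. (f i)^2) \<le> (\<Sum>i\<in>B. (g i)^2)"
  unfolding L2_set_def by simp

lemma inner_le: "(\<Sum>i\<in>A. f i * g i) \<le> L2_set f A * L2_set g A"
proof -
  have "(\<Sum>i\<in>A. f i * g i) \<le> (\<Sum>i\<in>A. \<bar>f i\<bar> * \<bar>g i\<bar>)"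
    by (rule sum_mono) (metis abs_ge_self abs_mult)
  also have "\<dots> \<le> L2_set f A * L2_set g A" by (rule L2_set_mult_ineq)
  finally show ?thesis .
qed

lemma inner_abs_le: "\<bar>\<Sum>i\<in>A. f i * g i\<bar> \<le> L2_set f A * L2_set g A"
proof -
  have "\<bar>\<Sum>i\<in>A. f i * g i\<bar> \<le> (\<Sum>i\<in>A. \<bar>f i * g i\<bar>)" by (rule sum_abs)
  also have "\<dots> = (\<Sum>i\<in>A. \<bar>f i\<bar> * \<bar>g i\<bar>)" by (simp add: abs_mult)
  also have "\<dots> \<le> L2_set f A * L2_set g A" by (rule L2_set_mult_ineq)
  finally show ?thesis .
qed

lemma unitv_L2: "unitv I x \<longleftrightarrow> L2_set x I = 1"
  unfolding unitv_def L2_set_def by simp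

lemma opnorm_L2: "opnorm I M = Sup ((\<lambda>x. L2_set (mvec I M x) I) ` {x. unitv I x})"
  unfolding opnorm_def L2_set_def by simp

lemma mvec_bound:
  assumes "finite I" "unitv I x"
  shows "L2_set (mvec I M x) I \<le> (\<Sum>i\<in>I. \<Sum>j\<in>I. \<bar>M i j\<bar>)"
proof -
  have xj: "\<bar>x j\<bar> \<le> 1" if "j \<in> I" for j
  proof -
    have "(x j)^2 \<le> (\<Sum>i\<in>I. (x i)^2)"
      using assms(1) that by (intro member_le_sum) auto
    then have "(x j)^2 \<le> 1^2" using assms(2) by (simp add: unitv_def)
    then show ?thesis by (metis abs_one abs_le_square_iff)
  qed
  have "L2_set (mvec I M x) I \<le> (\<Sum>i\<in>I. \<bar>mvec I M x i\<bar>)" by (rule L2_set_le_sum_abs)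
  also have "\<dots> \<le> (\<Sum>i\<in>I. \<Sum>j\<in>I. \<bar>M i j\<bar>)"
  proof (rule sum_mono)
    fix i assume "i \<in> I"
    have "\<bar>mvec I M x i\<bar> \<le> (\<Sum>j\<in>I. \<bar>M i j * x j\<bar>)" unfolding mvec_def by (rule sum_abs)
    also have "\<dots> \<le> (\<Sum>j\<in>I. \<bar>M i j\<bar>)"
    proof (rule sum_mono)
      fix j assume "j \<in> I"
      then show "\<bar>M i j * x j\<bar> \<le> \<bar>M i j\<bar>" using xj[of j]
        by (simp add: abs_mult mult_left_le)
    qed
    finally show "\<bar>mvec I M x i\<bar> \<le> (\<Sum>j\<in>I. \<bar>M i j\<bar>)" .
  qed
  finally show ?thesis .
qed

lemma opnorm_upper:
  assumes "finite I" "unitv I x"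
  shows "L2_set (mvec I M x) I \<le> opnorm I M"
  unfolding opnorm_L2
proof (rule cSup_upper)
  show "L2_set (mvec I M x) I \<in> (\<lambda>x. L2_set (mvec I M x) I) ` {x. unitv I x}" using assms by auto
  show "bdd_above ((\<lambda>x. L2_set (mvec I M x) I) ` {x. unitv I x})"
    using mvec_bound[OF assms(1)] by (auto intro!: bdd_aboveI2)
qed

lemma opnorm_nonneg:
  assumes "finite I" "I \<noteq> {}"
  shows "0 \<le> opnorm I M"
proof -
  obtain i0 where "i0 \<in> I" using assms by auto
  moreover have "(\<Sum>i\<in>I. (if i = i0 then 1 else 0::real)^2) = (\<Sum>i\<in>I. if i = i0 then 1 else 0)"
    by (rule sum.cong) auto
  ultimately have "unitv I (\<lambda>j. if j = i0 then 1 else 0)"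
    using assms(1) by (simp add: unitv_def)
  from opnorm_upper[OF assms(1) this] show ?thesis by (meson L2_set_nonneg order_trans)
qed

lemma mvec_scale: "mvec I M (\<lambda>j. c * x j) = (\<lambda>i. c * mvec I M x i)"
  unfolding mvec_def by (auto simp: sum_distrib_left algebra_simps)

lemma opnorm_scaled:
  assumes "finite I"
  shows "L2_set (mvec I M x) I \<le> opnorm I M * L2_set x I"
proof (cases "L2_set x I = 0")
  case True
  then have "\<forall>j\<in>I. x j = 0" using L2_set_eq_0_iff[OF assms] by auto
  then have "\<forall>i\<in>I. mvec I M x i = 0" unfolding mvec_def by auto
  then have "L2_set (mvec I M x) I = 0" by (simp add: L2_set_0')
  then show ?thesis using True by simp
next
  case False
  define r where "r = L2_set x I"
  have r: "r > 0" using False r_def L2_set_nonneg[of x I] by linarith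
  have "L2_set (\<lambda>j. (1/r) * x j) I = (1/r) * L2_set x I"
    by (rule L2_set_right_distrib[symmetric]) (use r in simp)
  then have "unitv I (\<lambda>j. (1/r) * x j)"
    unfolding unitv_L2 using r r_def by simp
  from opnorm_upper[OF assms this] have "L2_set (\<lambda>i. (1/r) * mvec I M x i) I \<le> opnorm I M"
    unfolding mvec_scale .
  then have "(1/r) * L2_set (mvec I M x) I \<le> opnorm I M"
    using r L2_set_right_distrib[of "1/r" "mvec I M x" I] by simp
  then show ?thesis using r unfolding r_def[symmetric] by (simp add: field_simps)
qed


lemma mvec_swap_inner:
  assumes "finite I"
  shows "(\<Sum>j\<in>I. y j * mvec I (mtr E) x j) = (\<Sum>i\<in>I. x i * mvec I E y i)"
proof -
  have "(\<Sum>j\<in>I. y j * mvec I (mtr E) x j) = (\<Sum>j\<in>I. \<Sum>i\<in>I. x i * E i j * y j)"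
    unfolding mvec_def mtr_def by (simp add: sum_distrib_left mult_ac)
  also have "\<dots> = (\<Sum>i\<in>I. \<Sum>j\<in>I. x i * E i j * y j)" by (rule sum.swap)
  also have "\<dots> = (\<Sum>i\<in>I. x i * mvec I E y i)"
    unfolding mvec_def by (simp add: sum_distrib_left mult_ac)
  finally show ?thesis .
qed

lemma transpose_bound:
  assumes "finite I" "b \<ge> 0" "\<And>z. L2_set (mvec I E z) I \<le> b * L2_set z I"
  shows "L2_set (mvec I (mtr E) x) I \<le> b * L2_set x I"
proof -
  define y where "y = mvec I (mtr E) x"
  have "(L2_set y I)^2 = (\<Sum>j\<in>I. y j * y j)" unfolding L2_sq by (simp add: power2_eq_square)
  also have "\<dots> = (\<Sum>i\<in>I. x i * mvec I E y i)" using mvec_swap_inner[OF assms(1), of y E x] y_def by simp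
  also have "\<dots> \<le> L2_set x I * L2_set (mvec I E y) I" by (rule inner_le)
  also have "\<dots> \<le> L2_set x I * (b * L2_set y I)" by (rule mult_left_mono[OF assms(3)]) simp
  finally have h: "(L2_set y I)^2 \<le> (b * L2_set x I) * L2_set y I" by (simp add: algebra_simps)
  show ?thesis
  proof (cases "L2_set y I = 0")
    case True then show ?thesis using assms(2) y_def by simp
  next
    case False
    then have "L2_set y I > 0" using L2_set_nonneg[of y I] by linarith
    with h show ?thesis unfolding y_def[symmetric] by (simp add: power2_eq_square)
  qed
qed

lemma eig_norm:
  assumes "finite I" "unitv I v" "\<forall>i\<in>I. mvec I (mtr M) (mvec I M v) i = s^2 * v i"
  shows "L2_set (mvec I M v) I = \<bar>s\<bar>"
proof -
  have "(L2_set (mvec I M v) I)^2 = (\<Sum>j\<in>I. mvec I M v j * mvec I M v j)" unfolding L2_sq by (simp add: power2_eq_square)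
  also have "\<dots> = (\<Sum>i\<in>I. v i * mvec I (mtr M) (mvec I M v) i)"
    using mvec_swap_inner[OF assms(1), of "mvec I M v" "mtr M" v] by (simp add: mtr_def)
  also have "\<dots> = (\<Sum>i\<in>I. s^2 * (v i)^2)"
    by (rule sum.cong) (simp_all add: assms(3) power2_eq_square)
  also have "\<dots> = s^2" using assms(2) by (simp add: unitv_def sum_distrib_left[symmetric])
  finally show ?thesis
    by (metis L2_set_nonneg abs_of_nonneg power2_eq_iff_nonneg abs_ge_zero power_abs)
qed

lemma mvec_rank1:
  "mvec J (\<lambda>p q. t * u p * u q + F p q) x = (\<lambda>p. t * (\<Sum>q\<in>J. u q * x q) * u p + mvec J F x p)"
  unfolding mvec_def by (rule ext) (simp add: distrib_left sum.distrib sum_distrib_left mult_ac)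

lemma pert_upper:
  assumes "finite J" "unitv J u" "\<And>z. L2_set (mvec J F z) J \<le> e * L2_set z J" "unitv J x"
  shows "L2_set (mvec J (\<lambda>p q. t * u p * u q + F p q) x) J \<le> \<bar>t\<bar> * \<bar>\<Sum>q\<in>J. u q * x q\<bar> + e"
proof -
  let ?c = "t * (\<Sum>q\<in>J. u q * x q)"
  have "L2_set (mvec J (\<lambda>p q. t * u p * u q + F p q) x) J \<le> L2_set (\<lambda>p. ?c * u p) J + L2_set (mvec J F x) J"
    unfolding mvec_rank1 by (rule L2_set_triangle_ineq)
  also have "L2_set (\<lambda>p. ?c * u p) J = \<bar>?c\<bar> * L2_set u J"
  proof -
    have "L2_set (\<lambda>p. ?c * u p) J = L2_set (\<lambda>p. \<bar>?c\<bar> * u p) J"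
      unfolding L2_set_def by (simp add: power_mult_distrib)
    also have "\<dots> = \<bar>?c\<bar> * L2_set u J" by (rule L2_set_right_distrib[symmetric]) simp
    finally show ?thesis .
  qed
  also have "L2_set (mvec J F x) J \<le> e" using assms(3)[of x] assms(4) by (simp add: unitv_L2)
  finally show ?thesis using assms(2) by (simp add: unitv_L2 abs_mult)
qed

lemma pert_lower:
  assumes "finite J" "unitv J u" "\<And>z. L2_set (mvec J F z) J \<le> e * L2_set z J" "t \<ge> 0"
  shows "t - e \<le> L2_set (mvec J (\<lambda>p q. t * u p * u q + F p q) u) J"
proof -
  have uu: "(\<Sum>q\<in>J. u q * u q) = 1" using assms(2) by (simp add: unitv_def power2_eq_square)
  have eq: "(\<lambda>p. t * u p) = (\<lambda>p. mvec J (\<lambda>p q. t * u p * u q + F p q) u p + (- mvec J F u p))"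
    unfolding mvec_rank1 uu by simp
  have "t = L2_set (\<lambda>p. t * u p) J"
    using L2_set_right_distrib[of t u J] assms by (simp add: unitv_L2)
  also have "\<dots> \<le> L2_set (mvec J (\<lambda>p q. t * u p * u q + F p q) u) J + L2_set (\<lambda>p. - mvec J F u p) J"
    unfolding eq by (rule L2_set_triangle_ineq)
  also have "L2_set (\<lambda>p. - mvec J F u p) J = L2_set (mvec J F u) J" unfolding L2_set_def by simp
  also have "\<dots> \<le> e" using assms(3)[of u] assms(2) by (simp add: unitv_L2)
  finally show ?thesis by simp
qed


lemma sum_prod: "(\<Sum>p\<in>A\<times>B. f p) = (\<Sum>j\<in>A. \<Sum>k\<in>B. f (j,k))"
  by (simp add: sum.cartesian_product)

lemma unitv_nonempty: "unitv I v \<Longrightarrow> I \<noteq> {}"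
  unfolding unitv_def by auto

lemma cs_sq: fixes f g :: "'a \<Rightarrow> real" shows "(\<Sum>i\<in>A. f i * g i)^2 \<le> (\<Sum>i\<in>A. (f i)^2) * (\<Sum>i\<in>A. (g i)^2)"
proof -
  have "\<bar>\<Sum>i\<in>A. f i * g i\<bar>^2 \<le> (L2_set f A * L2_set g A)^2"
    by (rule power_mono[OF inner_abs_le]) simp
  then show ?thesis by (simp add: power_mult_distrib L2_sq)
qed

lemma kron1:
  assumes fin: "finite I" and uv: "unitv I v"
  shows "L2_set (mvec (I\<times>I) (\<lambda>p q. v (fst p) * v (fst q) * B (snd p) (snd q)) x) (I\<times>I)
          \<le> opnorm I B * L2_set x (I\<times>I)"
proof -
  define y where "y = (\<lambda>k'. \<Sum>j'\<in>I. v j' * x (j',k'))"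
  have mv: "mvec (I\<times>I) (\<lambda>p q. v (fst p) * v (fst q) * B (snd p) (snd q)) x p = v (fst p) * mvec I B y (snd p)" for p
  proof -
    have "mvec (I\<times>I) (\<lambda>p q. v (fst p) * v (fst q) * B (snd p) (snd q)) x p
        = (\<Sum>j'\<in>I. \<Sum>k'\<in>I. v (fst p) * v j' * B (snd p) k' * x (j',k'))"
      unfolding mvec_def by (simp add: sum.cartesian_product case_prod_beta)
    also have "\<dots> = (\<Sum>k'\<in>I. \<Sum>j'\<in>I. v (fst p) * v j' * B (snd p) k' * x (j',k'))" by (rule sum.swap)
    also have "\<dots> = v (fst p) * mvec I B y (snd p)"
      unfolding mvec_def y_def by (simp add: sum_distrib_left mult_ac)
    finally show ?thesis .
  qed
  have vv: "(\<Sum>j\<in>I. (v j)^2) = 1" using uv by (simp add: unitv_def)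
  have "(\<Sum>p\<in>I\<times>I. (mvec (I\<times>I) (\<lambda>p q. v (fst p) * v (fst q) * B (snd p) (snd q)) x p)^2)
      = (\<Sum>j\<in>I. \<Sum>k\<in>I. (v j)^2 * (mvec I B y k)^2)"
    unfolding mv sum_prod by (simp add: power_mult_distrib)
  also have "\<dots> = (\<Sum>k\<in>I. (mvec I B y k)^2)"
    by (simp add: sum_distrib_left[symmetric] sum_distrib_right[symmetric] vv)
  finally have e1: "L2_set (mvec (I\<times>I) (\<lambda>p q. v (fst p) * v (fst q) * B (snd p) (snd q)) x) (I\<times>I)
      \<le> L2_set (mvec I B y) I" unfolding L2_le_iff by simp
  have "(\<Sum>k\<in>I. (y k)^2) \<le> (\<Sum>k\<in>I. (\<Sum>j\<in>I. (v j)^2) * (\<Sum>j\<in>I. (x (j,k))^2))"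
    unfolding y_def by (rule sum_mono) (rule cs_sq)
  also have "\<dots> = (\<Sum>k\<in>I. \<Sum>j\<in>I. (x (j,k))^2)" by (simp add: vv)
  also have "\<dots> = (\<Sum>p\<in>I\<times>I. (x p)^2)" unfolding sum_prod by (rule sum.swap)
  finally have e2: "L2_set y I \<le> L2_set x (I\<times>I)" unfolding L2_le_iff .
  have op0: "0 \<le> opnorm I B" using opnorm_nonneg[OF fin unitv_nonempty[OF uv]] .
  note e1
  also have "L2_set (mvec I B y) I \<le> opnorm I B * L2_set y I" by (rule opnorm_scaled[OF fin])
  also have "\<dots> \<le> opnorm I B * L2_set x (I\<times>I)" by (rule mult_left_mono[OF e2 op0])
  finally show ?thesis .
qed

lemma kron2:
  assumes fin: "finite I" and uv: "unitv I v"
  shows "L2_set (mvec (I\<times>I) (\<lambda>p q. B (fst p) (fst q) * v (snd p) * v (snd q)) x) (I\<times>I)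
          \<le> opnorm I B * L2_set x (I\<times>I)"
proof -
  define y where "y = (\<lambda>j'. \<Sum>k'\<in>I. v k' * x (j',k'))"
  have mv: "mvec (I\<times>I) (\<lambda>p q. B (fst p) (fst q) * v (snd p) * v (snd q)) x p = v (snd p) * mvec I B y (fst p)" for p
  proof -
    have "mvec (I\<times>I) (\<lambda>p q. B (fst p) (fst q) * v (snd p) * v (snd q)) x p
        = (\<Sum>j'\<in>I. \<Sum>k'\<in>I. v (snd p) * v k' * B (fst p) j' * x (j',k'))"
      unfolding mvec_def by (simp add: sum.cartesian_product case_prod_beta mult_ac)
    also have "\<dots> = v (snd p) * mvec I B y (fst p)"
      unfolding mvec_def y_def by (simp add: sum_distrib_left mult_ac)
    finally show ?thesis .
  qed
  have vv: "(\<Sum>j\<in>I. (v j)^2) = 1" using uv by (simp add: unitv_def)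
  have "(\<Sum>p\<in>I\<times>I. (mvec (I\<times>I) (\<lambda>p q. B (fst p) (fst q) * v (snd p) * v (snd q)) x p)^2)
      = (\<Sum>j\<in>I. \<Sum>k\<in>I. (v k)^2 * (mvec I B y j)^2)"
    unfolding mv sum_prod by (simp add: power_mult_distrib)
  also have "\<dots> = (\<Sum>j\<in>I. (mvec I B y j)^2)"
    by (simp add: sum_distrib_right[symmetric] vv)
  finally have e1: "L2_set (mvec (I\<times>I) (\<lambda>p q. B (fst p) (fst q) * v (snd p) * v (snd q)) x) (I\<times>I)
      \<le> L2_set (mvec I B y) I" unfolding L2_le_iff by simp
  have "(\<Sum>j\<in>I. (y j)^2) \<le> (\<Sum>j\<in>I. (\<Sum>k\<in>I. (v k)^2) * (\<Sum>k\<in>I. (x (j,k))^2))"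
    unfolding y_def by (rule sum_mono) (rule cs_sq)
  also have "\<dots> = (\<Sum>j\<in>I. \<Sum>k\<in>I. (x (j,k))^2)" by (simp add: vv)
  also have "\<dots> = (\<Sum>p\<in>I\<times>I. (x p)^2)" unfolding sum_prod by simp
  finally have e2: "L2_set y I \<le> L2_set x (I\<times>I)" unfolding L2_le_iff .
  have op0: "0 \<le> opnorm I B" using opnorm_nonneg[OF fin unitv_nonempty[OF uv]] .
  note e1
  also have "L2_set (mvec I B y) I \<le> opnorm I B * L2_set y I" by (rule opnorm_scaled[OF fin])
  also have "\<dots> \<le> opnorm I B * L2_set x (I\<times>I)" by (rule mult_left_mono[OF e2 op0])
  finally show ?thesis .
qed


lemma M_decomp:
  assumes uv: "unitv {..<n} v0"
  shows "slice_kron_sum n (\<lambda>i j k. \<tau> * v0 i * v0 j * v0 k + A i j k) p q - nwwT n p q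
    = \<tau>^2 * (v0 (fst p) * v0 (snd p)) * (v0 (fst q) * v0 (snd q))
      + (\<tau> * (v0 (fst p) * v0 (fst q) * (\<Sum>i\<in>{..<n}. v0 i * A i (snd p) (snd q)))
       + \<tau> * ((\<Sum>i\<in>{..<n}. v0 i * A i (fst p) (fst q)) * v0 (snd p) * v0 (snd q))
       + (slice_kron_sum n A p q - nwwT n p q))"
proof -
  obtain a b where p: "p = (a,b)" by (cases p)
  obtain a' b' where q: "q = (a',b')" by (cases q)
  have vv: "(\<Sum>i\<in>{..<n}. (v0 i)^2) = 1" using uv by (simp add: unitv_def)
  have "slice_kron_sum n (\<lambda>i j k. \<tau> * v0 i * v0 j * v0 k + A i j k) p q
     = (\<Sum>i<n. \<tau>^2 * (v0 a * v0 b) * (v0 a' * v0 b') * (v0 i)^2 + \<tau> * (v0 a * v0 a') * (v0 i * A i b b')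
          + \<tau> * (v0 b * v0 b') * (v0 i * A i a a') + A i a a' * A i b b')"
    unfolding slice_kron_sum_def p q by (rule sum.cong) (simp_all add: algebra_simps power2_eq_square)
  also have "\<dots> = \<tau>^2 * (v0 a * v0 b) * (v0 a' * v0 b') * (\<Sum>i<n. (v0 i)^2)
       + \<tau> * (v0 a * v0 a') * (\<Sum>i<n. v0 i * A i b b')
       + \<tau> * (v0 b * v0 b') * (\<Sum>i<n. v0 i * A i a a') + (\<Sum>i<n. A i a a' * A i b b')"
    by (simp add: sum.distrib sum_distrib_left)
  also have "\<dots> = \<tau>^2 * (v0 a * v0 b) * (v0 a' * v0 b')
       + (\<tau> * (v0 a * v0 a' * (\<Sum>i<n. v0 i * A i b b'))
       + \<tau> * ((\<Sum>i<n. v0 i * A i a a') * v0 b * v0 b')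
       + slice_kron_sum n A p q)"
    unfolding vv slice_kron_sum_def p q by (simp add: algebra_simps)
  finally show ?thesis unfolding p q by simp
qed

lemma mvec_E:
  "mvec J (\<lambda>p q. t * K1 p q + t * K2 p q + D p q) z = (\<lambda>r. t * mvec J K1 z r + t * mvec J K2 z r + mvec J D z r)"
  unfolding mvec_def by (rule ext) (simp add: distrib_right distrib_left sum.distrib sum_distrib_left mult_ac)

lemma L2_scale: "t \<ge> 0 \<Longrightarrow> L2_set (\<lambda>r. t * f r) A = t * L2_set f A"
  by (simp add: L2_set_right_distrib)

lemma E_bound:
  assumes fin: "finite I" and uv: "unitv I v" and t: "t \<ge> 0"
    and hD: "opnorm (I\<times>I) D \<le> e2" and hB: "opnorm I B \<le> e1"
  shows "L2_set (mvec (I\<times>I) (\<lambda>p q. t * (v (fst p) * v (fst q) * B (snd p) (snd q))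
           + t * (B (fst p) (fst q) * v (snd p) * v (snd q)) + D p q) z) (I\<times>I)
         \<le> (2 * t * e1 + e2) * L2_set z (I\<times>I)"
proof -
  let ?K1 = "\<lambda>p q. v (fst p) * v (fst q) * B (snd p) (snd q)"
  let ?K2 = "\<lambda>p q. B (fst p) (fst q) * v (snd p) * v (snd q)"
  let ?J = "I\<times>I"
  have finJ: "finite ?J" using fin by simp
  have z0: "L2_set z ?J \<ge> 0" by simp
  have "L2_set (mvec ?J (\<lambda>p q. t * ?K1 p q + t * ?K2 p q + D p q) z) ?J
      \<le> L2_set (\<lambda>r. t * mvec ?J ?K1 z r + t * mvec ?J ?K2 z r) ?J + L2_set (mvec ?J D z) ?J"
    unfolding mvec_E by (rule L2_set_triangle_ineq)
  also have "L2_set (\<lambda>r. t * mvec ?J ?K1 z r + t * mvec ?J ?K2 z r) ?J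
      \<le> L2_set (\<lambda>r. t * mvec ?J ?K1 z r) ?J + L2_set (\<lambda>r. t * mvec ?J ?K2 z r) ?J"
    by (rule L2_set_triangle_ineq)
  also have "L2_set (\<lambda>r. t * mvec ?J ?K1 z r) ?J \<le> t * (e1 * L2_set z ?J)"
    unfolding L2_scale[OF t]
    using kron1[OF fin uv, of B z] mult_right_mono[OF hB z0] t
    by (meson mult_left_mono order_trans)
  also have "L2_set (\<lambda>r. t * mvec ?J ?K2 z r) ?J \<le> t * (e1 * L2_set z ?J)"
    unfolding L2_scale[OF t]
    using kron2[OF fin uv, of B z] mult_right_mono[OF hB z0] t
    by (meson mult_left_mono order_trans)
  also have "L2_set (mvec ?J D z) ?J \<le> e2 * L2_set z ?J"
    using opnorm_scaled[OF finJ, of D z] mult_right_mono[OF hD z0] by linarith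
  finally show ?thesis by (simp add: algebra_simps)
qed


lemma final_alg:
  fixes c e :: real
  assumes "1 - 6 * e \<le> \<bar>c\<bar>"
  shows "1 - 12 * e \<le> c^2"
proof (cases "1 - 6*e \<ge> 0")
  case True
  have "(1 - 6*e)^2 \<le> \<bar>c\<bar>^2" by (rule power_mono[OF assms True])
  moreover have "1 - 12*e \<le> (1 - 6*e)^2" by (simp add: power2_eq_square algebra_simps)
  ultimately show ?thesis by simp
next
  case False
  then have "1 - 12*e < 0" by linarith
  then show ?thesis by (smt (verit) zero_le_power2)
qed

lemma core:
  assumes uv: "unitv {..<n} v0" and tp: "\<tau> > 0" and ep: "\<epsilon> \<ge> 0"
    and hD: "opnorm ({..<n}\<times>{..<n}) (\<lambda>p q. slice_kron_sum n A p q - nwwT n p q) \<le> \<epsilon> * \<tau>^2"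
    and hB: "opnorm {..<n} (\<lambda>j k. \<Sum>i\<in>{..<n}. v0 i * A i j k) \<le> \<epsilon> * \<tau>"
    and sv: "top_left_sv ({..<n}\<times>{..<n}) (\<lambda>p q. slice_kron_sum n (\<lambda>i j k. \<tau> * v0 i * v0 j * v0 k + A i j k) p q - nwwT n p q) v'
          \<or> top_right_sv ({..<n}\<times>{..<n}) (\<lambda>p q. slice_kron_sum n (\<lambda>i j k. \<tau> * v0 i * v0 j * v0 k + A i j k) p q - nwwT n p q) v'"
  shows "1 - 12 * \<epsilon> \<le> (\<Sum>p\<in>{..<n}\<times>{..<n}. v' p * (v0 (fst p) * v0 (snd p)))^2"
proof -
  define I where "I = {..<n}"
  define J where "J = I \<times> I"
  define B where "B = (\<lambda>j k. \<Sum>i\<in>I. v0 i * A i j k)"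
  define D where "D = (\<lambda>p q. slice_kron_sum n A p q - nwwT n p q)"
  define u where "u = (\<lambda>p. v0 (fst p) * v0 (snd p))"
  define E where "E = (\<lambda>p q. \<tau> * (v0 (fst p) * v0 (fst q) * B (snd p) (snd q))
           + \<tau> * (B (fst p) (fst q) * v0 (snd p) * v0 (snd q)) + D p q)"
  define M where "M = (\<lambda>p q. slice_kron_sum n (\<lambda>i j k. \<tau> * v0 i * v0 j * v0 k + A i j k) p q - nwwT n p q)"
  have fin: "finite I" and finJ: "finite J" unfolding I_def J_def by auto
  have uvI: "unitv I v0" using uv I_def by simp
  have Meq: "M = (\<lambda>p q. \<tau>^2 * u p * u q + E p q)"
    unfolding M_def E_def u_def D_def B_def I_def by (intro ext, subst M_decomp[OF uv]) (simp add: add.assoc)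
  have e0: "0 \<le> 2 * \<tau> * (\<epsilon> * \<tau>) + \<epsilon> * \<tau>^2" using tp ep by simp
  have hD': "opnorm (I\<times>I) D \<le> \<epsilon> * \<tau>^2" using hD unfolding I_def D_def .
  have hB': "opnorm I B \<le> \<epsilon> * \<tau>" using hB unfolding I_def B_def .
  have Eb: "L2_set (mvec J E z) J \<le> (2 * \<tau> * (\<epsilon> * \<tau>) + \<epsilon> * \<tau>^2) * L2_set z J" for z
    unfolding E_def J_def
    by (rule E_bound[OF fin uvI _ hD' hB']) (use tp in simp)
  have Etb: "L2_set (mvec J (mtr E) z) J \<le> (2 * \<tau> * (\<epsilon> * \<tau>) + \<epsilon> * \<tau>^2) * L2_set z J" for z
    by (rule transpose_bound[OF finJ e0 Eb])
  have uu: "unitv J u"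
  proof -
    have "(\<Sum>p\<in>J. (u p)^2) = (\<Sum>j\<in>I. \<Sum>k\<in>I. (v0 j)^2 * (v0 k)^2)"
      unfolding J_def u_def sum_prod by (simp add: power_mult_distrib)
    also have "\<dots> = 1" using uvI by (simp add: unitv_def sum_distrib_left[symmetric] sum_distrib_right[symmetric])
    finally show ?thesis unfolding unitv_def .
  qed
  define \<sigma> where "\<sigma> = opnorm J M"
  have low: "\<tau>^2 - (2 * \<tau> * (\<epsilon> * \<tau>) + \<epsilon> * \<tau>^2) \<le> \<sigma>"
  proof -
    have "\<tau>^2 - (2 * \<tau> * (\<epsilon> * \<tau>) + \<epsilon> * \<tau>^2) \<le> L2_set (mvec J M u) J"
      unfolding Meq by (rule pert_lower[OF finJ uu Eb]) simp
    also have "\<dots> \<le> \<sigma>" unfolding \<sigma>_def by (rule opnorm_upper[OF finJ uu])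
    finally show ?thesis .
  qed
  define c where "c = (\<Sum>q\<in>J. u q * v' q)"
  have up: "\<sigma> \<le> \<tau>^2 * \<bar>c\<bar> + (2 * \<tau> * (\<epsilon> * \<tau>) + \<epsilon> * \<tau>^2)"
    using sv[folded M_def I_def, folded J_def]
  proof
    assume "top_right_sv J M v'"
    then have uv': "unitv J v'" and eq: "\<forall>i\<in>J. mvec J (mtr M) (mvec J M v') i = \<sigma>^2 * v' i"
      unfolding top_right_sv_def \<sigma>_def by auto
    have "\<sigma> \<le> L2_set (mvec J M v') J" using eig_norm[OF finJ uv' eq] by simp
    also have "\<dots> \<le> \<bar>\<tau>^2\<bar> * \<bar>c\<bar> + (2 * \<tau> * (\<epsilon> * \<tau>) + \<epsilon> * \<tau>^2)"
      unfolding Meq c_def by (rule pert_upper[OF finJ uu Eb uv'])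
    finally show ?thesis by simp
  next
    assume "top_left_sv J M v'"
    then have uv': "unitv J v'" and eq: "\<forall>i\<in>J. mvec J M (mvec J (mtr M) v') i = \<sigma>^2 * v' i"
      unfolding top_left_sv_def \<sigma>_def by auto
    have mm: "mtr (mtr M) = M" unfolding mtr_def by simp
    have eq': "\<forall>i\<in>J. mvec J (mtr (mtr M)) (mvec J (mtr M) v') i = \<sigma>^2 * v' i" using eq mm by simp
    have Mt: "mtr M = (\<lambda>p q. \<tau>^2 * u p * u q + mtr E p q)" unfolding Meq mtr_def by (simp add: mult_ac)
    have "\<sigma> \<le> L2_set (mvec J (mtr M) v') J" using eig_norm[OF finJ uv' eq'] by simp
    also have "\<dots> \<le> \<bar>\<tau>^2\<bar> * \<bar>c\<bar> + (2 * \<tau> * (\<epsilon> * \<tau>) + \<epsilon> * \<tau>^2)"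
      unfolding Mt c_def by (rule pert_upper[OF finJ uu Etb uv'])
    finally show ?thesis by simp
  qed
  from low up have "\<tau>^2 * (1 - 6 * \<epsilon>) \<le> \<tau>^2 * \<bar>c\<bar>" by (simp add: algebra_simps power2_eq_square)
  then have "1 - 6 * \<epsilon> \<le> \<bar>c\<bar>" using tp by (simp add: mult_le_cancel_left)
  then have "1 - 12 * \<epsilon> \<le> c^2" by (rule final_alg)
  moreover have "c = (\<Sum>p\<in>{..<n}\<times>{..<n}. v' p * (v0 (fst p) * v0 (snd p)))"
    unfolding c_def u_def J_def I_def by (simp add: mult_ac)
  ultimately show ?thesis by simp
qed

theorem mainTheorem5:
  shows "\<exists>C::real. \<forall>(n::nat) (v0::nat \<Rightarrow> real) (\<tau>::real) (\<epsilon>::real)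
            (A::nat \<Rightarrow> nat \<Rightarrow> nat \<Rightarrow> real) (v'::nat \<times> nat \<Rightarrow> real).
     let I = {..<n}; J = I \<times> I;
         T = (\<lambda>i j k. \<tau> * v0 i * v0 j * v0 k + A i j k);
         M = (\<lambda>p q. slice_kron_sum n T p q - nwwT n p q)
     in unitv I v0 \<longrightarrow> \<tau> > 0 \<longrightarrow> \<epsilon> \<ge> 0 \<longrightarrow>
        opnorm J (\<lambda>p q. slice_kron_sum n A p q - nwwT n p q) \<le> \<epsilon> * \<tau>^2 \<longrightarrow>
        opnorm I (\<lambda>j k. \<Sum>i\<in>I. v0 i * A i j k) \<le> \<epsilon> * \<tau> \<longrightarrow>
        (top_left_sv J M v' \<or> top_right_sv J M v') \<longrightarrow>
        (\<Sum>p\<in>J. v' p * (v0 (fst p) * v0 (snd p)))^2 \<ge> 1 - C * \<epsilon>"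
  unfolding Let_def
  by (rule exI[of _ 12], intro allI impI, rule core)

end
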